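(* Let $n$ be odd, $M$ an $n\times n$ HW-matrix and $S\in\mathcal P_n$. (1) If $S$ is an almost spin$^c$ set for $M$, then $|S|\equiv\frac{n-1}{2}\pmod 2$. (2) If $S$ is an almost spin$^c$ set for $M$, then $S$ is a spin$^c$ set for $M$.
   Context: $\mathcal S=\{0,1,2,3\}$ is the Klein four-group ($\mathbb Z_2$-vector space) with $x+x=0$, $1+2=3$, $1+3=2$, $2+3=1$. $\mathcal P_n$ is the power set of $\{1,\dots,n\}$ as a $\mathbb Z_2$-algebra (addition = symmetric difference, product = intersection); $|U|_2=|U|\bmod 2$. For $M\in\mathcal S^{n\times n}$ and $U\in\mathcal P_n$, $J_M(U)=\{j:\sum_{i\in U}M_{ij}=1\}$. $M$ is distinguished if it has $1$ on the diagonal and $2$ or $3$ off the diagonal; $M$ is an HW-matrix if it is distinguished, every column sum is $0$, and $J_M(U)\neq\emptyset$ for every $U\ne\emptyset,\{1,\dots,n\}$. $S\in\mathcal P_n$ is a spin$^c$ set for $M$ if $|(J_M(U)+U)\cap S|_2=\binom{|U|}{2}\bmod2$ for every $U\in\mathcal P_n$; it is an almost spin$^c$ set if this holds for every $U\subseteq\{1,\dots,n-1\}$. *)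

theory Defs
  imports Main
begin

text \<open>The Klein four-group S = {0,1,2,3}, encoded as naturals 0..3 with the bit
  representation x = 2*b2 + b1; addition is bitwise xor (so 1+2=3, 1+3=2, 2+3=1, x+x=0).
  Matrices are functions nat => nat => nat with indices in {1..n}.\<close>

definition klein_add :: "nat \<Rightarrow> nat \<Rightarrow> nat" where
  "klein_add x y = (x mod 2 + y mod 2) mod 2 + 2 * ((x div 2 + y div 2) mod 2)"

definition klein_sum :: "('i \<Rightarrow> nat) \<Rightarrow> 'i set \<Rightarrow> nat" where
  "klein_sum f U = Finite_Set.fold (\<lambda>i acc. klein_add (f i) acc) 0 U"

definition is_klein_matrix :: "nat \<Rightarrow> (nat \<Rightarrow> nat \<Rightarrow> nat) \<Rightarrow> bool" where
  "is_klein_matrix n M \<longleftrightarrow> (\<forall>i\<in>{1..n}. \<forall>j\<in>{1..n}. M i j \<in> {0,1,2,3})"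

definition J_M :: "nat \<Rightarrow> (nat \<Rightarrow> nat \<Rightarrow> nat) \<Rightarrow> nat set \<Rightarrow> nat set" where
  "J_M n M U = {j\<in>{1..n}. klein_sum (\<lambda>i. M i j) U = 1}"

definition distinguished :: "nat \<Rightarrow> (nat \<Rightarrow> nat \<Rightarrow> nat) \<Rightarrow> bool" where
  "distinguished n M \<longleftrightarrow> is_klein_matrix n M \<and>
     (\<forall>i\<in>{1..n}. M i i = 1) \<and>
     (\<forall>i\<in>{1..n}. \<forall>j\<in>{1..n}. i \<noteq> j \<longrightarrow> M i j \<in> {2,3})"

definition HW_matrix :: "nat \<Rightarrow> (nat \<Rightarrow> nat \<Rightarrow> nat) \<Rightarrow> bool" where
  "HW_matrix n M \<longleftrightarrow> distinguished n M \<and>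
     (\<forall>j\<in>{1..n}. klein_sum (\<lambda>i. M i j) {1..n} = 0) \<and>
     (\<forall>U. U \<subseteq> {1..n} \<longrightarrow> U \<noteq> {} \<longrightarrow> U \<noteq> {1..n} \<longrightarrow> J_M n M U \<noteq> {})"

text \<open>Symmetric difference (addition in P_n).\<close>
definition symdiff :: "'a set \<Rightarrow> 'a set \<Rightarrow> 'a set" where
  "symdiff A B = (A - B) \<union> (B - A)"

definition spinc_cond :: "nat \<Rightarrow> (nat \<Rightarrow> nat \<Rightarrow> nat) \<Rightarrow> nat set \<Rightarrow> nat set \<Rightarrow> bool" where
  "spinc_cond n M S U \<longleftrightarrow>
     card (symdiff (J_M n M U) U \<inter> S) mod 2 = (card U choose 2) mod 2"

definition spinc_set :: "nat \<Rightarrow> (nat \<Rightarrow> nat \<Rightarrow> nat) \<Rightarrow> nat set \<Rightarrow> bool" where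
  "spinc_set n M S \<longleftrightarrow> S \<subseteq> {1..n} \<and> (\<forall>U. U \<subseteq> {1..n} \<longrightarrow> spinc_cond n M S U)"

definition almost_spinc_set :: "nat \<Rightarrow> (nat \<Rightarrow> nat \<Rightarrow> nat) \<Rightarrow> nat set \<Rightarrow> bool" where
  "almost_spinc_set n M S \<longleftrightarrow> S \<subseteq> {1..n} \<and> (\<forall>U. U \<subseteq> {1..n-1} \<longrightarrow> spinc_cond n M S U)"

end

theory Submission
  imports Defs
begin

lemma par_eq: "((x::nat) mod 2 = y mod 2) = (even x = even y)"
  by (metis even_iff_mod_2_eq_zero odd_iff_mod_2_eq_one)

lemma bits1: "((a::nat) mod 2 + 2*(c mod 2) = 1) = (odd a \<and> even c)"
  by (cases "even a"; cases "even c") (auto simp: even_iff_mod_2_eq_zero odd_iff_mod_2_eq_one)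

lemma bits0: "((a::nat) mod 2 + 2*(c mod 2) = 0) \<Longrightarrow> even a"
  by (cases "even a") (auto simp: odd_iff_mod_2_eq_one)

lemma nat_eq2: "(x::nat) mod 2 = y mod 2 \<Longrightarrow> x div 2 = y div 2 \<Longrightarrow> x = y"
  by (metis div_mult_mod_eq)

lemma L1: fixes n k :: nat assumes "odd n" "k \<le> n" shows "(n-k) div 2 + k div 2 = (n-1) div 2"
proof -
  obtain t where n: "n = 2*t+1" using assms(1) oddE by blast
  define q where "q = k div 2"
  define r where "r = k mod 2"
  have k: "k = 2*q + r" "r < 2" unfolding q_def r_def by simp_all
  have "q \<le> t" using assms(2) k n by linarith
  then have "n - k = 2*(t-q) + (1 - r)" using k n by linarith
  moreover have "1 - r < 2" by simp
  ultimately have "(n-k) div 2 = t - q" by simp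
  moreover have "(n-1) div 2 = t" using n by simp
  ultimately show ?thesis using \<open>q \<le> t\<close> q_def by simp
qed

lemma L2: "(a::nat)+b=s \<Longrightarrow> b mod 2 = y mod 2 \<Longrightarrow> s mod 2 = (x+y) mod 2 \<Longrightarrow> a mod 2 = x mod 2"
  unfolding par_eq by auto

lemma L3: "even (s::nat) \<Longrightarrow> s = x + y \<Longrightarrow> p + q = (n::nat) - 1 \<Longrightarrow> odd n \<Longrightarrow> (odd x \<and> even p) = (odd y \<and> even q)"
proof -
  assume "even s" "s = x + y" "p + q = n - 1" "odd n"
  moreover have "even (n - 1)" using \<open>odd n\<close> by (metis oddE add_diff_cancel_right' even_mult_iff even_numeral)
  ultimately have e1: "even (p+q)" "even (x+y)" by simp_all
  then show ?thesis by auto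
qed

lemma L4: "(m div 2 + (m::nat)) mod 2 = Suc m div 2 mod 2"
proof -
  obtain q r where m: "m = 2*q + r" "r < 2" by (metis div_mult_mod_eq mod_less_divisor zero_less_numeral mult.commute)
  show ?thesis
  proof (cases "r = 0")
    case True then show ?thesis using m by (simp add: par_eq)
  next
    case False then have "r = 1" using m by simp
    then show ?thesis using m by (simp add: par_eq)
  qed
qed

lemma ka_mod: "klein_add x y mod 2 = (x mod 2 + y mod 2) mod 2"
  unfolding klein_add_def by simp

lemma ka_div: "klein_add x y div 2 = (x div 2 + y div 2) mod 2"
  unfolding klein_add_def by simp

lemma ka_comm: "klein_add a (klein_add b c) = klein_add b (klein_add a c)"
proof (rule nat_eq2)
  show "klein_add a (klein_add b c) mod 2 = klein_add b (klein_add a c) mod 2"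
    unfolding ka_mod par_eq by auto
  show "klein_add a (klein_add b c) div 2 = klein_add b (klein_add a c) div 2"
    unfolding ka_div par_eq by auto
qed

lemma ksum: "finite U \<Longrightarrow> klein_sum f U = (\<Sum>i\<in>U. f i mod 2) mod 2 + 2*((\<Sum>i\<in>U. f i div 2) mod 2)"
proof (induction U rule: finite_induct)
  case empty
  then show ?case by (simp add: klein_sum_def)
next
  case (insert x F)
  interpret comp_fun_commute "\<lambda>i acc. klein_add (f i) acc"
    by standard (auto simp: fun_eq_iff ka_comm)
  have "klein_sum f (insert x F) = klein_add (f x) (klein_sum f F)"
    unfolding klein_sum_def using insert by simp
  also have "\<dots> = (f x mod 2 + (\<Sum>i\<in>F. f i mod 2)) mod 2 + 2*((f x div 2 + (\<Sum>i\<in>F. f i div 2)) mod 2)"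
    unfolding klein_add_def insert.IH by (simp add: mod_add_right_eq)
  finally show ?case using insert by simp
qed

lemma choose2_mod: "(m choose 2) mod 2 = (m div 2) mod 2"
proof (induction m)
  case 0 then show ?case by (simp add: numeral_2_eq_2)
next
  case (Suc m)
  have "Suc m choose 2 = m + (m choose 2)"
    using binomial_Suc_Suc[of m 1] by (simp add: numeral_2_eq_2)
  then have "(Suc m choose 2) mod 2 = (m + (m choose 2) mod 2) mod 2" by (simp add: mod_add_right_eq)
  also have "\<dots> = (m div 2 + m) mod 2" using Suc.IH mod_add_right_eq[of m "m div 2" 2] by (simp add: ac_simps)
  finally show ?case using L4 by simp
qed

lemma hi_sum:
  assumes "HW_matrix n M" "U \<subseteq> {1..n}" "j \<in> {1..n}"
  shows "(\<Sum>i\<in>U. M i j div 2) = card (U - {j})"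
proof -
  have d: "distinguished n M" using assms(1) unfolding HW_matrix_def by blast
  have fU: "finite U" using assms(2) finite_subset by blast
  have g: "\<And>i. i \<in> U \<Longrightarrow> M i j div 2 = (if i = j then 0 else 1)"
  proof -
    fix i assume "i \<in> U"
    then have i: "i \<in> {1..n}" using assms(2) by blast
    show "M i j div 2 = (if i = j then 0 else 1)"
    proof (cases "i = j")
      case True then show ?thesis using d i unfolding distinguished_def by auto
    next
      case False
      then have "M i j \<in> {2,3}" using d i assms(3) unfolding distinguished_def by blast
      then show ?thesis using False by auto
    qed
  qed
  have "(\<Sum>i\<in>U. M i j div 2) = (\<Sum>i\<in>U. (if i = j then 0 else 1::nat))"
    using g by (rule sum.cong[OF refl])
  also have "\<dots> = card (U - {j})"
  proof (cases "j \<in> U")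
    case True
    have "(\<Sum>i\<in>U. (if i = j then 0 else 1::nat)) = (if j = j then 0 else 1) + (\<Sum>i\<in>U - {j}. (if i = j then 0 else 1::nat))"
      using sum.remove[OF fU True] by blast
    also have "\<dots> = (\<Sum>i\<in>U - {j}. 1::nat)" by (auto intro!: sum.cong)
    finally show ?thesis by simp
  next
    case False
    then have "U - {j} = U" by blast
    moreover have "(\<Sum>i\<in>U. (if i = j then 0 else 1::nat)) = (\<Sum>i\<in>U. 1::nat)"
      by (rule sum.cong) (use False in auto)
    ultimately show ?thesis by simp
  qed
  finally show ?thesis .
qed

lemma Jchar:
  assumes "HW_matrix n M" "U \<subseteq> {1..n}"
  shows "J_M n M U = {j\<in>{1..n}. odd (\<Sum>i\<in>U. M i j mod 2) \<and> even (card (U - {j}))}"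
proof -
  have fU: "finite U" using assms(2) finite_subset by blast
  have "\<And>j. j \<in> {1..n} \<Longrightarrow> (klein_sum (\<lambda>i. M i j) U = 1) = (odd (\<Sum>i\<in>U. M i j mod 2) \<and> even (card (U - {j})))"
  proof -
    fix j assume j: "j \<in> {1..n}"
    show "(klein_sum (\<lambda>i. M i j) U = 1) = (odd (\<Sum>i\<in>U. M i j mod 2) \<and> even (card (U - {j})))"
      unfolding ksum[OF fU] hi_sum[OF assms j] by (rule bits1)
  qed
  then show ?thesis unfolding J_M_def by blast
qed

lemma Jcompl:
  assumes "HW_matrix n M" "odd n" "U \<subseteq> {1..n}"
  shows "J_M n M ({1..n} - U) = J_M n M U"
proof -
  have U': "{1..n} - U \<subseteq> {1..n}" by blast
  have "\<And>j. j \<in> {1..n} \<Longrightarrow> (odd (\<Sum>i\<in>{1..n} - U. M i j mod 2) \<and> even (card (({1..n} - U) - {j})))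
      = (odd (\<Sum>i\<in>U. M i j mod 2) \<and> even (card (U - {j})))"
  proof -
    fix j assume j: "j \<in> {1..n}"
    have "klein_sum (\<lambda>i. M i j) {1..n} = 0" using assms(1) j unfolding HW_matrix_def by blast
    then have ev: "even (\<Sum>i\<in>{1..n}. M i j mod 2)" unfolding ksum[OF finite_atLeastAtMost] by (rule bits0)
    have s: "(\<Sum>i\<in>{1..n}. M i j mod 2) = (\<Sum>i\<in>{1..n} - U. M i j mod 2) + (\<Sum>i\<in>U. M i j mod 2)"
      using sum.subset_diff[OF assms(3) finite_atLeastAtMost] by blast
    have c1: "card ({1..n} - {j}) = n - 1" using j by simp
    have "{1..n} - {j} = (({1..n} - U) - {j}) \<union> (U - {j})" using assms(3) by blast
    moreover have "finite (({1..n} - U) - {j})" "finite (U - {j})" "(({1..n} - U) - {j}) \<inter> (U - {j}) = {}"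
      using assms(3) finite_subset by auto
    ultimately have c: "card (({1..n} - U) - {j}) + card (U - {j}) = n - 1"
      using c1 card_Un_disjoint by metis
    show "?thesis j" using L3[OF ev s c assms(2)] by simp
  qed
  then show ?thesis unfolding Jchar[OF assms(1) U'] Jchar[OF assms(1) assms(3)] by blast
qed

lemma J_subset: "J_M n M U \<subseteq> {1..n}" unfolding J_M_def by blast

lemma card_split:
  assumes "X \<subseteq> N" "S \<subseteq> N" "finite N"
  shows "card ((N - X) \<inter> S) + card (X \<inter> S) = card S"
proof -
  have "(N - X) \<inter> S = S - (X \<inter> S)" using assms by blast
  moreover have "finite S" using assms finite_subset by blast
  ultimately show ?thesis using card_Diff_subset[of "X \<inter> S" S] card_mono[of S "X \<inter> S"] by auto
qed

theorem mainTheorem8: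
  fixes n :: nat and M :: "nat \<Rightarrow> nat \<Rightarrow> nat" and S :: "nat set"
  assumes "odd n" and "HW_matrix n M" and "S \<subseteq> {1..n}"
  shows "(almost_spinc_set n M S \<longrightarrow> card S mod 2 = ((n - 1) div 2) mod 2)
       \<and> (almost_spinc_set n M S \<longrightarrow> spinc_set n M S)"
proof (intro conjI impI)
  assume A: "almost_spinc_set n M S"
  have n1: "n \<ge> 1" using assms(1) by (cases n) auto
  have d: "distinguished n M" using assms(2) unfolding HW_matrix_def by blast
  have nn: "n \<in> {1..n}" using n1 by simp
  have Jn: "J_M n M {n} = {n}"
  proof -
    have "\<And>j. j \<in> {1..n} \<Longrightarrow> (odd (\<Sum>i\<in>{n}. M i j mod 2) \<and> even (card ({n} - {j}))) = (j = n)"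
    proof -
      fix j assume j: "j \<in> {1..n}"
      show "?thesis j"
      proof (cases "j = n")
        case True then show ?thesis using d nn unfolding distinguished_def by auto
      next
        case False then have "{n} - {j} = {n}" by blast
        then show ?thesis using False by simp
      qed
    qed
    moreover have "{n} \<subseteq> {1..n}" using nn by blast
    ultimately show ?thesis unfolding Jchar[OF assms(2) \<open>{n} \<subseteq> {1..n}\<close>] using nn by auto
  qed
  have e: "{1..n} - {n} = {1..n-1}" using n1 by auto
  have J1: "J_M n M {1..n-1} = {n}" using Jcompl[OF assms(2) assms(1), of "{n}"] nn Jn e by simp
  have "spinc_cond n M S {1..n-1}" using A unfolding almost_spinc_set_def by blast
  moreover have "symdiff {n} {1..n-1} = {1..n}" unfolding symdiff_def using n1 by auto
  ultimately have "card S mod 2 = ((n-1) choose 2) mod 2"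
    unfolding spinc_cond_def J1 using assms(3) by (simp add: Int_absorb1)
  then show C: "card S mod 2 = ((n - 1) div 2) mod 2" using choose2_mod by simp
  show "spinc_set n M S" unfolding spinc_set_def
  proof (intro conjI allI impI)
    show "S \<subseteq> {1..n}" by fact
    fix U assume U: "U \<subseteq> {1..n}"
    show "spinc_cond n M S U"
    proof (cases "n \<in> U")
      case False
      have "U \<subseteq> {1..n-1}"
      proof
        fix x assume "x \<in> U"
        then have "x \<in> {1..n}" "x \<noteq> n" using U False by auto
        then show "x \<in> {1..n-1}" by auto
      qed
      then show ?thesis using A unfolding almost_spinc_set_def by blast
    next
      case True
      define U' where "U' = {1..n} - U"
      have U's: "U' \<subseteq> {1..n-1}"
      proof
        fix x assume "x \<in> U'"
        then have "x \<in> {1..n}" "x \<noteq> n" using True unfolding U'_def by auto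
        then show "x \<in> {1..n-1}" by auto
      qed
      have U'N: "U' \<subseteq> {1..n}" unfolding U'_def by blast
      have UU: "U = {1..n} - U'" unfolding U'_def using U by blast
      have c': "spinc_cond n M S U'" using A U's unfolding almost_spinc_set_def by blast
      have JJ: "J_M n M U = J_M n M U'" unfolding UU using Jcompl[OF assms(2) assms(1) U'N] .
      have sd: "symdiff (J_M n M U) U = {1..n} - symdiff (J_M n M U') U'"
      proof -
        have "symdiff (J_M n M U) U = symdiff (J_M n M U') ({1..n} - U')" using JJ UU by simp
        also have "\<dots> = {1..n} - symdiff (J_M n M U') U'"
          unfolding symdiff_def using J_subset[of n M U'] U'N by blast
        finally show ?thesis .
      qed
      have X: "symdiff (J_M n M U') U' \<subseteq> {1..n}"
        unfolding symdiff_def using J_subset[of n M U'] U'N by blast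
      have cs: "card (symdiff (J_M n M U) U \<inter> S) + card (symdiff (J_M n M U') U' \<inter> S) = card S"
        unfolding sd by (rule card_split[OF X assms(3) finite_atLeastAtMost])
      have cU: "card U = n - card U'" unfolding UU using card_Diff_subset[of U' "{1..n}"] U'N finite_subset by auto
      have cle: "card U' \<le> n" using card_mono[OF finite_atLeastAtMost U'N] by simp
      have h: "card (symdiff (J_M n M U') U' \<inter> S) mod 2 = card U' div 2 mod 2"
        using c' unfolding spinc_cond_def choose2_mod .
      show ?thesis unfolding spinc_cond_def choose2_mod cU
        using L2[OF cs h] C L1[OF assms(1) cle] by simp
    qed
  qed
qed

end
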